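(* Let $F=\frac19\begin{pmatrix}1&1&1\\1&1&1\\1&1&1\end{pmatrix}$ (box blur filter). Then the equation $F*X=B$ with the periodic boundary condition, for unknown $X\in\mathbb{R}^{m\times n}$, has a unique solution for every $B\in\mathbb{R}^{m\times n}$ if and only if $m,n\notin\{3l: l\in\mathbb{N}\}$.
   Context: $\mathbb{N}=\{1,2,3,\dots\}$. For $F=[f_{ij}]\in\mathbb{R}^{3\times3}$ and $X=[x_{ij}]\in\mathbb{R}^{m\times n}$, the convolution $F*X\in\mathbb{R}^{m\times n}$ is defined by $[F*X]_{ij}=\sum_{l_1=1}^3\sum_{l_2=1}^3 f_{l_1l_2}\,x_{i-l_1+2,\,j-l_2+2}$ for $1\le i\le m$, $1\le j\le n$, where the periodic boundary condition sets $x_{0j}=x_{mj}$, $x_{m+1,j}=x_{1j}$, $x_{i0}=x_{in}$, $x_{i,n+1}=x_{i1}$ (for all indices $i\in\{0,\dots,m+1\}$, $j\in\{0,\dots,n+1\}$, so corners are also determined, e.g. $x_{00}=x_{mn}$). *)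

theory Defs
  imports "HOL-Analysis.Analysis"
begin

text \<open>An m x n real matrix is represented as a function int => int => real whose
  entries are indexed by 1..m, 1..n and which is zero outside that range.\<close>
definition mats :: "nat \<Rightarrow> nat \<Rightarrow> (int \<Rightarrow> int \<Rightarrow> real) set" where
  "mats m n = {X. \<forall>i j. \<not> (1 \<le> i \<and> i \<le> int m \<and> 1 \<le> j \<and> j \<le> int n) \<longrightarrow> X i j = 0}"

text \<open>Periodic index: maps 0 to m and m+1 to 1 (and generally reduces into 1..m).\<close>
definition pidx :: "nat \<Rightarrow> int \<Rightarrow> int" where
  "pidx m k = ((k - 1) mod int m) + 1"

definition conv_per :: "nat \<Rightarrow> nat \<Rightarrow> (int \<Rightarrow> int \<Rightarrow> real) \<Rightarrow> (int \<Rightarrow> int \<Rightarrow> real) \<Rightarrow> (int \<Rightarrow> int \<Rightarrow> real)" where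
  "conv_per m n F X = (\<lambda>i j.
     if 1 \<le> i \<and> i \<le> int m \<and> 1 \<le> j \<and> j \<le> int n then
       (\<Sum>l1\<in>{1..3::int}. \<Sum>l2\<in>{1..3::int}.
          F l1 l2 * X (pidx m (i - l1 + 2)) (pidx n (j - l2 + 2)))
     else 0)"

definition box_filter :: "int \<Rightarrow> int \<Rightarrow> real" where
  "box_filter = (\<lambda>_ _. 1/9)"

end

theory Submission
  imports Defs
begin


lemma sum13: "(\<Sum>l\<in>{1..3::int}. f l) = f 1 + f 2 + (f 3 :: real)"
proof -
  have "{1..3::int} = {1,2,3}" by auto
  then show ?thesis by simp
qed

lemma pidx_range: "m \<ge> 1 \<Longrightarrow> 1 \<le> pidx m k \<and> pidx m k \<le> int m"
proof -
  assume "m \<ge> 1"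
  then have "(k - 1) mod int m < int m" "0 \<le> (k - 1) mod int m" by simp_all
  then show ?thesis unfolding pidx_def by linarith
qed

lemma pidx_id: "1 \<le> k \<Longrightarrow> k \<le> int m \<Longrightarrow> pidx m k = k"
  unfolding pidx_def by simp

lemma pidx_shift: "pidx m (pidx m i + d) = pidx m (i + d)"
proof -
  have "pidx m i + d - 1 = (i - 1) mod int m + d" unfolding pidx_def by simp
  then show ?thesis unfolding pidx_def by (simp add: mod_simps algebra_simps)
qed

definition per :: "nat \<Rightarrow> (int \<Rightarrow> real) \<Rightarrow> bool" where
  "per m x \<longleftrightarrow> (\<forall>k. x (k + int m) = x k)"

lemma per_nat: "per m x \<Longrightarrow> x (k + int m * int s) = x k"
proof (induction s arbitrary: k)
  case 0 then show ?case by simp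
next
  case (Suc s)
  have "x (k + int m * int (Suc s)) = x ((k + int m * int s) + int m)" by (simp add: algebra_simps)
  also have "\<dots> = x (k + int m * int s)" using Suc.prems unfolding per_def by blast
  finally show ?case using Suc by simp
qed

lemma per_int: assumes p: "per m x" shows "x (k + int m * s) = x k"
proof (cases "s \<ge> 0")
  case True
  then obtain t where "s = int t" using nonneg_int_cases by blast
  then show ?thesis using per_nat[OF p, of k t] by simp
next
  case False
  then obtain t where s: "s = - int t" using nonpos_int_cases[of s] by (simp add: not_le) (metis less_imp_le nonpos_int_cases)
  have "x ((k + int m * s) + int m * int t) = x (k + int m * s)" using per_nat[OF p] by blast
  then show ?thesis using s by (simp add: algebra_simps)
qed

lemma per_pidx: "per m x \<Longrightarrow> x (pidx m k) = x k"
proof -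
  assume p: "per m x"
  have "k - 1 = int m * ((k - 1) div int m) + (k - 1) mod int m" by simp
  then have "k = pidx m k + int m * ((k - 1) div int m)" unfolding pidx_def by linarith
  then show ?thesis using per_int[OF p, of "pidx m k" "(k - 1) div int m"] by simp
qed

definition T1 :: "nat \<Rightarrow> (int \<Rightarrow> real) \<Rightarrow> int \<Rightarrow> real" where
  "T1 m g i = (\<Sum>l\<in>{1..3::int}. g (pidx m (i - l + 2)))"

lemma T1_expand: "T1 m g i = g (pidx m (i+1)) + g (pidx m i) + g (pidx m (i - 1))"
proof -
  have "i - 1 + 2 = i + 1" "i - 2 + 2 = i" "i - 3 + 2 = i - 1" by simp_all
  then show ?thesis unfolding T1_def sum13 by (simp only:)
qed

lemma T1_per: "per m g \<Longrightarrow> T1 m g i = g (i+1) + g i + g (i - 1)"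
  unfolding T1_expand by (simp add: per_pidx)

lemma T1_pidx: "T1 m g (pidx m i) = T1 m g i"
proof -
  have "pidx m (pidx m i + 1) = pidx m (i+1)" "pidx m (pidx m i) = pidx m i"
     "pidx m (pidx m i - 1) = pidx m (i - 1)"
    using pidx_shift[of m i 1] pidx_shift[of m i 0] pidx_shift[of m i "-1"] by simp_all
  then show ?thesis unfolding T1_expand by simp
qed

lemma T1_cong: "m \<ge> 1 \<Longrightarrow> (\<And>k. 1 \<le> k \<Longrightarrow> k \<le> int m \<Longrightarrow> h k = h' k) \<Longrightarrow> T1 m h j = T1 m h' j"
proof -
  assume m: "m \<ge> 1" and h: "\<And>k. 1 \<le> k \<Longrightarrow> k \<le> int m \<Longrightarrow> h k = h' k"
  show ?thesis unfolding T1_def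
  proof (rule sum.cong)
    fix l show "h (pidx m (j - l + 2)) = h' (pidx m (j - l + 2))"
      using h pidx_range[OF m, of "j - l + 2"] by blast
  qed simp
qed

definition ext :: "nat \<Rightarrow> (int \<Rightarrow> real) \<Rightarrow> int \<Rightarrow> real" where
  "ext m g = (\<lambda>k. g (pidx m k))"

lemma per_ext: "per m (ext m g)"
proof -
  have "(k + int m - 1) mod int m = (k - 1) mod int m" for k
    using mod_add_self2[of "k-1" "int m"] by (simp add: algebra_simps)
  then show ?thesis unfolding per_def ext_def pidx_def by simp
qed

lemma pidx_pidx: "pidx m (pidx m k) = pidx m k"
  using pidx_shift[of m k 0] by simp

lemma T1_ext: "T1 m (ext m g) i = T1 m g i"
  unfolding T1_def ext_def by (simp add: pidx_pidx)

lemma const_int: assumes h: "\<And>i::int. f (i+1) = f i" shows "f i = f 0"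
proof -
  have a: "f (int t) = f 0" for t
  proof (induction t)
    case (Suc t)
    have "int (Suc t) = int t + 1" by simp
    then have "f (int (Suc t)) = f (int t)" using h[of "int t"] by (simp only:)
    then show ?case using Suc.IH by (rule trans)
  qed simp
  have b: "f (- int t) = f 0" for t
  proof (induction t)
    case (Suc t)
    have "- int t = - int (Suc t) + 1" by simp
    then have "f (- int (Suc t)) = f (- int t)" using h[of "- int (Suc t)"] by (simp only:)
    then show ?case using Suc.IH by (rule trans)
  qed simp
  show ?thesis
  proof (cases "i \<ge> 0")
    case True
    then obtain t where "i = int t" using nonneg_int_cases by blast
    then show ?thesis using a[of t] by (simp only:)
  next
    case False
    then have "- i \<ge> 0" by simp
    then obtain t where "- i = int t" using nonneg_int_cases by blast
    then have "i = - int t" by simp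
    then show ?thesis using b[of t] by (simp only:)
  qed
qed



lemma per3_nat: assumes "\<And>i. D (i + 3) = (D i :: real)" shows "D (i + 3 * int t) = D i"
proof (induction t)
  case (Suc t)
  have "D (i + 3 * int (Suc t)) = D ((i + 3 * int t) + 3)" by (simp add: algebra_simps)
  then show ?case using Suc assms by simp
qed simp

lemma uniq1:
  assumes m: "m \<ge> 1" and nd: "\<not> 3 dvd m"
    and h: "\<And>i. 1 \<le> i \<Longrightarrow> i \<le> int m \<Longrightarrow> T1 m g i = T1 m g' i"
    and i: "1 \<le> i" "i \<le> int m"
  shows "g i = g' i"
proof -
  define D where "D k = ext m g k - ext m g' k" for k
  have perD: "per m D" using per_ext[of m g] per_ext[of m g'] unfolding per_def D_def by simp
  have all: "T1 m g k = T1 m g' k" for k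
  proof -
    have "T1 m g (pidx m k) = T1 m g' (pidx m k)" using h pidx_range[OF m, of k] by blast
    then show ?thesis by (simp only: T1_pidx)
  qed
  have z: "D (k+1) + D k + D (k - 1) = 0" for k
    using all[of k] T1_ext[of m g k] T1_ext[of m g' k] T1_per[OF per_ext, of m g k] T1_per[OF per_ext, of m g' k]
    unfolding D_def by simp
  have p3: "D (k + 3) = D k" for k
    using z[of "k+1"] z[of "k+2"] by (simp add: algebra_simps)
  have pm: "D (k + int m) = D k" for k using perD unfolding per_def by blast
  have step: "D (k + 1) = D k" for k
  proof -
    obtain q r where qr: "m = 3 * q + r" "r = 1 \<or> r = 2"
    proof -
      have "m = 3 * (m div 3) + m mod 3" by simp
      moreover have "m mod 3 = 1 \<or> m mod 3 = 2" using nd by presburger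
      ultimately show ?thesis using that by blast
    qed
    show ?thesis
    proof (cases "r = 1")
      case True
      then have e: "(k + 1) + 3 * int q = k + int m" using qr by simp
      have "D (k + 1) = D ((k + 1) + 3 * int q)" using per3_nat[of D, OF p3, of "k+1" q] by simp
      also have "\<dots> = D (k + int m)" by (simp only: e)
      also have "\<dots> = D k" using pm[of k] .
      finally show ?thesis .
    next
      case False
      then have r2: "r = 2" using qr by simp
      have e2: "D (j + 2) = D j" for j
      proof -
        have e: "(j + 2) + 3 * int q = j + int m" using qr r2 by simp
        have "D (j + 2) = D ((j + 2) + 3 * int q)" using per3_nat[of D, OF p3, of "j+2" q] by simp
        also have "\<dots> = D (j + int m)" by (simp only: e)
        also have "\<dots> = D j" using pm[of j] .
        finally show ?thesis .
      qed
      have "D (k + 1) = D ((k + 1) + 3)" by (rule p3[symmetric])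
      also have "\<dots> = D ((k + 2) + 2)" by (simp add: algebra_simps)
      also have "\<dots> = D k" using e2[of "k+2"] e2[of k] by (simp only:)
      finally show ?thesis .
    qed
  qed
  have c: "D k = D 0" for k using const_int[of D, OF step] .
  have "D 0 = 0" using z[of 0] c[of 1] c[of "-1"] by simp
  then have "D i = 0" using c[of i] by simp
  then show ?thesis unfolding D_def ext_def using pidx_id[OF i] by simp
qed



definition S1 :: "(int \<Rightarrow> real) \<Rightarrow> int \<Rightarrow> real" where
  "S1 x i = x (i - 1) + x i + x (i + 1)"

definition tot :: "nat \<Rightarrow> (int \<Rightarrow> real) \<Rightarrow> real" where
  "tot m x = (\<Sum>u<m. x (int u))"

lemma shift_sum: assumes p: "per m x" shows "(\<Sum>u<m. x (i + int u)) = tot m x"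
proof -
  define F where "F i = (\<Sum>u<m. x (i + int u))" for i
  have Fs: "F (i + 1) = F i" for i
  proof -
    have "(\<Sum>u<Suc m. x (i + int u)) = x i + F (i + 1)"
      unfolding F_def by (subst sum.lessThan_Suc_shift) (simp add: algebra_simps)
    moreover have "(\<Sum>u<Suc m. x (i + int u)) = F i + x i"
      unfolding F_def using p[unfolded per_def, rule_format, of i] by simp
    ultimately show ?thesis by simp
  qed
  have "F i = F 0" using Fs by (rule const_int)
  then show ?thesis unfolding F_def tot_def by simp
qed

lemma tot_S1: assumes p: "per m x" shows "tot m (S1 x) = 3 * tot m x"
proof -
  have "tot m (S1 x) = (\<Sum>u<m. x (-1 + int u)) + (\<Sum>u<m. x (0 + int u)) + (\<Sum>u<m. x (1 + int u))"
  proof -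
    have "\<And>u. -1 + int u = int u - 1" "\<And>u. 1 + int u = int u + 1" by simp_all
    then show ?thesis unfolding tot_def S1_def by (simp only: sum.distrib add_0)
  qed
  moreover have "(\<Sum>u<m. x (-1 + int u)) = tot m x" "(\<Sum>u<m. x (0 + int u)) = tot m x"
    "(\<Sum>u<m. x (1 + int u)) = tot m x" using shift_sum[OF p] by blast+
  ultimately show ?thesis by simp
qed

lemma per_S1: "per m x \<Longrightarrow> per m (S1 x)"
proof -
  assume p: "per m x"
  show ?thesis unfolding per_def S1_def
  proof
    fix k
    have "x (k + int m - 1) = x (k - 1)" "x (k + int m + 1) = x (k + 1)"
      using p[unfolded per_def, rule_format, of "k - 1"] p[unfolded per_def, rule_format, of "k + 1"]
      by (simp_all add: algebra_simps)
    then show "x (k + int m - 1) + x (k + int m) + x (k + int m + 1) = x (k - 1) + x k + x (k + 1)"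
      using p unfolding per_def by simp
  qed
qed

lemma sum3: fixes f :: "nat \<Rightarrow> real" shows "(\<Sum>t<k. f (3*t) + f (3*t+1) + f (3*t+2)) = (\<Sum>u<3*k. f u)"
proof (induction k)
  case (Suc k)
  have e: "3 * Suc k = Suc (Suc (Suc (3 * k)))" by simp
  have "(\<Sum>u<3*Suc k. f u) = (\<Sum>u<3*k. f u) + f (3*k) + f (3*k+1) + f (3*k+2)"
    unfolding e by simp
  then show ?case using Suc.IH by simp
qed simp

definition P1 :: "nat \<Rightarrow> nat \<Rightarrow> (int \<Rightarrow> real) \<Rightarrow> int \<Rightarrow> real" where
  "P1 m k x i = tot m x / 3 - (\<Sum>t<k. x (i + 2 + 3 * int t))"

definition P2 :: "nat \<Rightarrow> nat \<Rightarrow> (int \<Rightarrow> real) \<Rightarrow> int \<Rightarrow> real" where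
  "P2 m k x i = (\<Sum>t<Suc k. x (i + 1 + 3 * int t)) - tot m x / 3"

lemma P1_left: assumes p: "per m x" and mk: "m = 3 * k + 1" shows "P1 m k (S1 x) i = x i"
proof -
  have a: "(\<Sum>t<k. S1 x (i + 2 + 3 * int t)) = (\<Sum>u<3*k. x (i + 1 + int u))"
    using sum3[of "\<lambda>u. x (i + 1 + int u)" k] unfolding S1_def by (simp add: algebra_simps)
  have "(\<Sum>u<Suc (3*k). x (i + int u)) = x i + (\<Sum>u<3*k. x (i + 1 + int u))"
    by (subst sum.lessThan_Suc_shift) (simp add: algebra_simps)
  then have "(\<Sum>u<3*k. x (i + 1 + int u)) = tot m x - x i"
    using shift_sum[OF p, of i] mk by simp
  then show ?thesis unfolding P1_def using a tot_S1[OF p] by simp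
qed

lemma P2_left: assumes p: "per m x" and mk: "m = 3 * k + 2" shows "P2 m k (S1 x) i = x i"
proof -
  have a: "(\<Sum>t<Suc k. S1 x (i + 1 + 3 * int t)) = (\<Sum>u<3*Suc k. x (i + int u))"
    using sum3[of "\<lambda>u. x (i + int u)" "Suc k"] unfolding S1_def by (simp add: algebra_simps)
  have e: "3 * Suc k = Suc m" using mk by simp
  have "(\<Sum>u<3*Suc k. x (i + int u)) = (\<Sum>u<m. x (i + int u)) + x (i + int m)"
    unfolding e by simp
  then have "(\<Sum>u<3*Suc k. x (i + int u)) = tot m x + x (i + int m)"
    using shift_sum[OF p, of i] by simp
  also have "x (i + int m) = x i" using p unfolding per_def by blast
  finally show ?thesis unfolding P2_def using a tot_S1[OF p] by simp
qed

lemma P1_comm: assumes p: "per m x" shows "S1 (P1 m k x) i = P1 m k (S1 x) i"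
  unfolding P1_def using tot_S1[OF p]
  by (simp add: S1_def sum.distrib algebra_simps)

lemma P2_comm: assumes p: "per m x" shows "S1 (P2 m k x) i = P2 m k (S1 x) i"
  unfolding P2_def using tot_S1[OF p]
  by (simp add: S1_def sum.distrib algebra_simps del: sum.lessThan_Suc)

lemma P1_per: assumes p: "per m x" shows "per m (P1 m k x)"
  unfolding per_def P1_def
proof
  fix j
  have "x (j + int m + 2 + 3 * int t) = x (j + 2 + 3 * int t)" for t
    using p[unfolded per_def, rule_format, of "j + 2 + 3 * int t"] by (simp add: algebra_simps)
  then show "tot m x / 3 - (\<Sum>t<k. x (j + int m + 2 + 3 * int t)) = tot m x / 3 - (\<Sum>t<k. x (j + 2 + 3 * int t))"
    by simp
qed

lemma P2_per: assumes p: "per m x" shows "per m (P2 m k x)"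
  unfolding per_def P2_def
proof
  fix j
  have "x (j + int m + 1 + 3 * int t) = x (j + 1 + 3 * int t)" for t
    using p[unfolded per_def, rule_format, of "j + 1 + 3 * int t"] by (simp add: algebra_simps)
  then show "(\<Sum>t<Suc k. x (j + int m + 1 + 3 * int t)) - tot m x / 3 = (\<Sum>t<Suc k. x (j + 1 + 3 * int t)) - tot m x / 3"
    by simp
qed

lemma exist1:
  assumes m: "m \<ge> 1" and nd: "\<not> 3 dvd m"
  shows "\<exists>g. \<forall>i. 1 \<le> i \<and> i \<le> int m \<longrightarrow> T1 m g i = b i"
proof -
  define B where "B = ext m b"
  have pB: "per m B" unfolding B_def by (rule per_ext)
  obtain g where pg: "per m g" and sg: "\<And>i. S1 g i = B i"
  proof -
    obtain q r where qr: "m = 3 * q + r" "r = 1 \<or> r = 2"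
    proof -
      have "m = 3 * (m div 3) + m mod 3" by simp
      moreover have "m mod 3 = 1 \<or> m mod 3 = 2" using nd by presburger
      ultimately show ?thesis using that by blast
    qed
    show ?thesis
    proof (cases "r = 1")
      case True
      show ?thesis
        by (rule that[of "P1 m q B"]) (use P1_per[OF pB] P1_comm[OF pB] P1_left[OF pB] True qr in auto)
    next
      case False
      then have "r = 2" using qr by simp
      show ?thesis
        by (rule that[of "P2 m q B"]) (use P2_per[OF pB] P2_comm[OF pB] P2_left[OF pB] \<open>r = 2\<close> qr in auto)
    qed
  qed
  show ?thesis
  proof (intro exI allI impI)
    fix i assume i: "1 \<le> i \<and> i \<le> int m"
    have "T1 m g i = S1 g i" unfolding T1_per[OF pg] S1_def by simp
    also have "\<dots> = b i" using sg[of i] pidx_id[of i m] i unfolding B_def ext_def by simp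
    finally show "T1 m g i = b i" .
  qed
qed



lemma conv_T:
  assumes "1 \<le> i" "i \<le> int m" "1 \<le> j" "j \<le> int n"
  shows "conv_per m n box_filter X i j = (1/9) * T1 m (\<lambda>i'. T1 n (X i') j) i"
  using assms unfolding conv_per_def T1_def box_filter_def by (simp add: sum_distrib_left)

lemma conv_out:
  assumes "\<not> (1 \<le> i \<and> i \<le> int m \<and> 1 \<le> j \<and> j \<le> int n)"
  shows "conv_per m n box_filter X i j = 0"
  unfolding conv_per_def by (simp only: if_not_P[OF assms])

definition w3 :: "int \<Rightarrow> real" where
  "w3 k = (if k mod 3 = 0 then 1 else if k mod 3 = 1 then -1 else 0)"

lemma w3_sum: "w3 (k+1) + w3 k + w3 (k - 1) = 0"
proof -
  have "k mod 3 = 0 \<or> k mod 3 = 1 \<or> k mod 3 = 2" by presburger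
  moreover
  { assume "k mod 3 = 0" then have "(k+1) mod 3 = 1" "(k - 1) mod 3 = 2" by presburger+ }
  moreover
  { assume "k mod 3 = 1" then have "(k+1) mod 3 = 2" "(k - 1) mod 3 = 0" by presburger+ }
  moreover
  { assume "k mod 3 = 2" then have "(k+1) mod 3 = 0" "(k - 1) mod 3 = 1" by presburger+ }
  ultimately show ?thesis unfolding w3_def by auto
qed

lemma w3_pidx: assumes "3 dvd m" shows "w3 (pidx m k) = w3 k"
proof -
  have d: "3 dvd int m" using assms by presburger
  have "((k - 1) mod int m) mod 3 = (k - 1) mod 3" using d by (rule mod_mod_cancel)
  then have "pidx m k mod 3 = k mod 3" unfolding pidx_def
    by (metis mod_add_left_eq diff_add_cancel)
  then show ?thesis unfolding w3_def by simp
qed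

lemma T1_w3: "3 dvd m \<Longrightarrow> T1 m w3 i = 0"
  unfolding T1_expand using w3_pidx w3_sum by simp

lemma T1_const: "T1 m (\<lambda>_. c) i = 3 * c"
  unfolding T1_expand by simp

lemma kernel_m:
  assumes m: "m \<ge> 1" and n: "n \<ge> 1" and d: "3 dvd m"
  shows "\<exists>K \<in> mats m n. K \<noteq> (\<lambda>i j. 0) \<and> conv_per m n box_filter K = (\<lambda>i j. 0)"
proof
  define K where "K i j = (if 1 \<le> i \<and> i \<le> int m \<and> 1 \<le> j \<and> j \<le> int n then w3 i else 0)" for i j
  show "K \<in> mats m n" unfolding mats_def K_def by auto
  have "3 \<le> m" using d m by (auto elim!: dvdE)
  then have "K 3 1 = 1" unfolding K_def w3_def using n by simp
  then have "K \<noteq> (\<lambda>i j. 0)" by (metis zero_neq_one)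
  moreover have "conv_per m n box_filter K i j = 0" for i j
  proof (cases "1 \<le> i \<and> i \<le> int m \<and> 1 \<le> j \<and> j \<le> int n")
    case True
    then have j: "1 \<le> j" "j \<le> int n" by auto
    have "T1 m (\<lambda>i'. T1 n (K i') j) i = T1 m (\<lambda>i'. 3 * w3 i') i"
    proof (rule T1_cong[OF m])
      fix k assume k: "1 \<le> k" "k \<le> int m"
      have "T1 n (K k) j = T1 n (\<lambda>_. w3 k) j"
        by (rule T1_cong[OF n]) (use k in \<open>simp add: K_def\<close>)
      then show "T1 n (K k) j = 3 * w3 k" by (simp add: T1_const)
    qed
    also have "\<dots> = 3 * T1 m w3 i" unfolding T1_expand by simp
    also have "\<dots> = 0" using T1_w3[OF d] by simp
    finally show ?thesis using conv_T[of i m j n K] True by simp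
  qed (rule conv_out)
  then have "conv_per m n box_filter K = (\<lambda>i j. 0)" by blast
  ultimately show "K \<noteq> (\<lambda>i j. 0) \<and> conv_per m n box_filter K = (\<lambda>i j. 0)" by blast
qed

lemma kernel_n:
  assumes m: "m \<ge> 1" and n: "n \<ge> 1" and d: "3 dvd n"
  shows "\<exists>K \<in> mats m n. K \<noteq> (\<lambda>i j. 0) \<and> conv_per m n box_filter K = (\<lambda>i j. 0)"
proof
  define K where "K i j = (if 1 \<le> i \<and> i \<le> int m \<and> 1 \<le> j \<and> j \<le> int n then w3 j else 0)" for i j
  show "K \<in> mats m n" unfolding mats_def K_def by auto
  have "3 \<le> n" using d n by (auto elim!: dvdE)
  then have "K 1 3 = 1" unfolding K_def w3_def using m by simp
  then have "K \<noteq> (\<lambda>i j. 0)" by (metis zero_neq_one)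
  moreover have "conv_per m n box_filter K i j = 0" for i j
  proof (cases "1 \<le> i \<and> i \<le> int m \<and> 1 \<le> j \<and> j \<le> int n")
    case True
    then have j: "1 \<le> j" "j \<le> int n" by auto
    have "T1 m (\<lambda>i'. T1 n (K i') j) i = T1 m (\<lambda>i'. 0) i"
    proof (rule T1_cong[OF m])
      fix k assume k: "1 \<le> k" "k \<le> int m"
      have "T1 n (K k) j = T1 n w3 j"
        by (rule T1_cong[OF n]) (use k in \<open>simp add: K_def\<close>)
      then show "T1 n (K k) j = 0" using T1_w3[OF d] by simp
    qed
    also have "\<dots> = 0" using T1_const[of m 0] by simp
    finally show ?thesis using conv_T[of i m j n K] True by simp
  qed (rule conv_out)
  then have "conv_per m n box_filter K = (\<lambda>i j. 0)" by blast
  ultimately show "K \<noteq> (\<lambda>i j. 0) \<and> conv_per m n box_filter K = (\<lambda>i j. 0)" by blast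
qed

lemma not_unique:
  assumes m: "m \<ge> 1" and n: "n \<ge> 1" and d: "3 dvd m \<or> 3 dvd n"
  shows "\<not> (\<forall>B \<in> mats m n. \<exists>!X. X \<in> mats m n \<and> conv_per m n box_filter X = B)"
proof
  assume H: "\<forall>B \<in> mats m n. \<exists>!X. X \<in> mats m n \<and> conv_per m n box_filter X = B"
  obtain K where K: "K \<in> mats m n" "K \<noteq> (\<lambda>i j. 0)" "conv_per m n box_filter K = (\<lambda>i j. 0)"
    using d kernel_m[OF m n] kernel_n[OF m n] by blast
  have z: "(\<lambda>i j. 0::real) \<in> mats m n" unfolding mats_def by simp
  have cz: "conv_per m n box_filter (\<lambda>i j. 0) = (\<lambda>i j. 0)"
    unfolding conv_per_def by (intro ext) simp
  from H z have "\<exists>!X. X \<in> mats m n \<and> conv_per m n box_filter X = (\<lambda>i j. 0)" by blast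
  then have "K = (\<lambda>i j. 0)" using K z cz by blast
  then show False using K(2) by simp
qed



theorem corollary2:
  fixes m n :: nat
  assumes "m \<ge> 1" and "n \<ge> 1"
  shows "(\<forall>B \<in> mats m n. \<exists>!X. X \<in> mats m n \<and> conv_per m n box_filter X = B)
     \<longleftrightarrow> (\<not> (\<exists>l::nat. l \<ge> 1 \<and> m = 3 * l) \<and> \<not> (\<exists>l::nat. l \<ge> 1 \<and> n = 3 * l))"
proof
  assume H: "\<forall>B \<in> mats m n. \<exists>!X. X \<in> mats m n \<and> conv_per m n box_filter X = B"
  show "\<not> (\<exists>l::nat. l \<ge> 1 \<and> m = 3 * l) \<and> \<not> (\<exists>l::nat. l \<ge> 1 \<and> n = 3 * l)"
  proof (rule ccontr)
    assume "\<not> (\<not> (\<exists>l::nat. l \<ge> 1 \<and> m = 3 * l) \<and> \<not> (\<exists>l::nat. l \<ge> 1 \<and> n = 3 * l))"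
    then have "3 dvd m \<or> 3 dvd n" by auto
    with not_unique[OF assms] H show False by blast
  qed
next
  assume N: "\<not> (\<exists>l::nat. l \<ge> 1 \<and> m = 3 * l) \<and> \<not> (\<exists>l::nat. l \<ge> 1 \<and> n = 3 * l)"
  have m: "m \<ge> 1" and n: "n \<ge> 1" by (fact assms(1), fact assms(2))
  have nm: "\<not> 3 dvd m"
  proof
    assume "3 dvd m"
    then obtain l where l: "m = 3 * l" by (auto elim: dvdE)
    then have "l \<ge> 1" using m by simp
    then show False using N l by blast
  qed
  have nn: "\<not> 3 dvd n"
  proof
    assume "3 dvd n"
    then obtain l where l: "n = 3 * l" by (auto elim: dvdE)
    then have "l \<ge> 1" using n by simp
    then show False using N l by blast
  qed
  show "\<forall>B \<in> mats m n. \<exists>!X. X \<in> mats m n \<and> conv_per m n box_filter X = B"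
  proof
    fix B assume B: "B \<in> mats m n"
    have B0: "B i j = 0" if "\<not> (1 \<le> i \<and> i \<le> int m \<and> 1 \<le> j \<and> j \<le> int n)" for i j
      using B that unfolding mats_def by blast
    show "\<exists>!X. X \<in> mats m n \<and> conv_per m n box_filter X = B"
    proof (rule ex_ex1I)
      have exZ: "\<forall>j. \<exists>z. \<forall>i. 1 \<le> i \<and> i \<le> int m \<longrightarrow> T1 m z i = 9 * B i j"
      proof
        fix j show "\<exists>z. \<forall>i. 1 \<le> i \<and> i \<le> int m \<longrightarrow> T1 m z i = 9 * B i j"
          using exist1[OF m nm, of "\<lambda>i. 9 * B i j"] by simp
      qed
      obtain Z where Z0: "\<forall>j. \<forall>i. 1 \<le> i \<and> i \<le> int m \<longrightarrow> T1 m (Z j) i = 9 * B i j"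
        using choice[OF exZ] by blast
      have Z: "T1 m (Z j) i = 9 * B i j" if "1 \<le> i" "i \<le> int m" for i j using Z0 that by blast
      have exX: "\<forall>i. \<exists>x. \<forall>j. 1 \<le> j \<and> j \<le> int n \<longrightarrow> T1 n x j = Z j i"
      proof
        fix i show "\<exists>x. \<forall>j. 1 \<le> j \<and> j \<le> int n \<longrightarrow> T1 n x j = Z j i"
          using exist1[OF n nn, of "\<lambda>j. Z j i"] by simp
      qed
      obtain Xs where Xs0: "\<forall>i. \<forall>j. 1 \<le> j \<and> j \<le> int n \<longrightarrow> T1 n (Xs i) j = Z j i"
        using choice[OF exX] by blast
      have Xs: "T1 n (Xs i) j = Z j i" if "1 \<le> j" "j \<le> int n" for i j using Xs0 that by blast
      define X where "X i j = (if 1 \<le> i \<and> i \<le> int m \<and> 1 \<le> j \<and> j \<le> int n then Xs i j else 0)" for i j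
      have XM: "X \<in> mats m n" unfolding mats_def X_def by auto
      have "conv_per m n box_filter X i j = B i j" for i j
      proof (cases "1 \<le> i \<and> i \<le> int m \<and> 1 \<le> j \<and> j \<le> int n")
        case True
        then have i: "1 \<le> i" "i \<le> int m" and j: "1 \<le> j" "j \<le> int n" by auto
        have "T1 m (\<lambda>i'. T1 n (X i') j) i = T1 m (Z j) i"
        proof (rule T1_cong[OF m])
          fix k assume k: "1 \<le> k" "k \<le> int m"
          have "T1 n (X k) j = T1 n (Xs k) j"
            by (rule T1_cong[OF n]) (use k in \<open>simp add: X_def\<close>)
          then show "T1 n (X k) j = Z j k" using Xs[OF j] by simp
        qed
        also have "\<dots> = 9 * B i j" using Z[OF i] .
        finally show ?thesis using conv_T[OF i j, of X] by simp
      next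
        case False
        then show ?thesis using conv_out[OF False] B0[OF False] by simp
      qed
      then have "conv_per m n box_filter X = B" by (intro ext)
      with XM show "\<exists>X. X \<in> mats m n \<and> conv_per m n box_filter X = B" by blast
    next
      fix X Y
      assume X: "X \<in> mats m n \<and> conv_per m n box_filter X = B"
        and Y: "Y \<in> mats m n \<and> conv_per m n box_filter Y = B"
      have "X i j = Y i j" for i j
      proof (cases "1 \<le> i \<and> i \<le> int m \<and> 1 \<le> j \<and> j \<le> int n")
        case True
        then have i: "1 \<le> i" "i \<le> int m" and j: "1 \<le> j" "j \<le> int n" by auto
        have row: "T1 n (X k) j' = T1 n (Y k) j'"
          if k: "1 \<le> k" "k \<le> int m" and j': "1 \<le> j'" "j' \<le> int n" for k j'
        proof (rule uniq1[OF m nm _ k])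
          fix i' assume i': "1 \<le> i'" "i' \<le> int m"
          have "conv_per m n box_filter X i' j' = conv_per m n box_filter Y i' j'"
            using X Y by simp
          then show "T1 m (\<lambda>i'. T1 n (X i') j') i' = T1 m (\<lambda>i'. T1 n (Y i') j') i'"
            using conv_T[OF i' j', of X] conv_T[OF i' j', of Y] by simp
        qed
        show ?thesis
          by (rule uniq1[OF n nn _ j]) (rule row[OF i])
      next
        case False
        have "X \<in> mats m n" "Y \<in> mats m n" using X Y by simp_all
        then have "X i j = 0" "Y i j = 0" using False unfolding mats_def by auto
        then show ?thesis by simp
      qed
      then show "X = Y" by (intro ext)
    qed
  qed
qed

end
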